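(* Let $n\ge 2$ be an integer. Then $$\binom{n^3-\lfloor\frac{(n-1)^3+1}{2}\rfloor}{3n^2-3n+1}+\binom{n^3-\lfloor\frac{(n-1)^3+2}{2}\rfloor}{3n^2-3n+1}< n^{3n^2}.$$ *)

theory Defs
  imports Main
begin

end

theory Submission
  imports Defs Complex_Main
begin

lemma pow_fact_le_exp: "(x::real) \<ge> 0 \<Longrightarrow> x^n / fact n \<le> exp x"
proof -
  assume x: "x \<ge> 0"
  have s: "(\<lambda>i. x^i /\<^sub>R fact i) sums exp x" by (rule exp_converges)
  have "(\<Sum>i\<in>{n}. x^i /\<^sub>R fact i) \<le> suminf (\<lambda>i. x^i /\<^sub>R fact i)"
    by (rule sum_le_suminf) (use s x in \<open>auto simp: sums_iff\<close>)
  then show ?thesis using s by (simp add: sums_iff divide_inverse mult.commute)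
qed

lemma fact_choose_le: "fact k * (m choose k) \<le> (m::nat) ^ k"
proof (cases "k \<le> m")
  case True
  have "m choose k \<le> fact m div fact (m - k)"
    using True by (subst binomial_fact_lemma[symmetric]) auto
  have "fact k * (m choose k) * fact (m-k) = fact m"
    using binomial_fact_lemma[OF True] by (simp add: mult_ac)
  then have "fact k * (m choose k) = fact m div fact (m - k)"
    by (metis fact_nonzero nonzero_mult_div_cancel_right)
  then show ?thesis using fact_div_fact_le_pow[OF True] by simp
next
  case False
  then show ?thesis by (simp add: binomial_eq_0)
qed

lemma choose_bound:
  assumes k: "k > 0" and h: "3 * real m \<le> c * real k" and c: "c \<ge> 0"
  shows "real (m choose k) \<le> c ^ k"
proof -
  have "real (fact k) * real (m choose k) \<le> real m ^ k"
    using fact_choose_le[of k m] by (metis of_nat_fact of_nat_le_iff of_nat_mult of_nat_power)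
  then have "real (m choose k) \<le> real m ^ k / fact k"
    by (simp add: field_simps)
  also have "\<dots> = (real m / real k) ^ k * (real k ^ k / fact k)"
    using k by (simp add: power_divide)
  also have "\<dots> \<le> (real m / real k) ^ k * exp (real k)"
    by (intro mult_left_mono pow_fact_le_exp) auto
  also have "exp (real k) = exp 1 ^ k"
    by (metis exp_of_nat_mult mult.right_neutral)
  also have "(real m / real k) ^ k * exp 1 ^ k = (real m / real k * exp 1) ^ k"
    by (simp only: power_mult_distrib)
  also have "\<dots> \<le> c ^ k"
  proof (rule power_mono)
    have e: "exp 1 \<le> (3::real)" using exp_le by simp
    have "real m / real k * exp 1 \<le> real m / real k * 3"
      by (intro mult_left_mono e) auto
    also have "\<dots> \<le> c" using h k by (simp add: field_simps)
    finally show "real m / real k * exp 1 \<le> c" .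
  qed auto
  finally show ?thesis .
qed

theorem proposition4:
  fixes n :: nat
  assumes "n \<ge> 2"
  shows "((n^3 - ((n - 1)^3 + 1) div 2) choose (3*n^2 - 3*n + 1))
       + ((n^3 - ((n - 1)^3 + 2) div 2) choose (3*n^2 - 3*n + 1)) < n ^ (3*n^2)"
proof (cases "n \<le> 4")
  case True
  define m1 where "m1 = n^3 - ((n - 1)^3 + 1) div 2"
  define m2 where "m2 = n^3 - ((n - 1)^3 + 2) div 2"
  have "(m1 choose (3*n^2 - 3*n + 1)) + (m2 choose (3*n^2 - 3*n + 1)) \<le> 2^m1 + 2^m2"
    by (intro add_mono binomial_le_pow2)
  also have "\<dots> < n ^ (3*n^2)"
  proof -
    have "n = 2 \<or> n = 3 \<or> n = 4" using True assms by auto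
    then show ?thesis unfolding m1_def m2_def by (elim disjE) simp_all
  qed
  finally show ?thesis unfolding m1_def m2_def .
next
  case False
  define k where "k = 3*n^2 - 3*n + 1"
  define M where "M = (n - 1)^3"
  define j where "j = n - 5"
  have j: "n = j + 5" using False unfolding j_def by simp
  have k': "k = 3*j^2 + 27*j + 61" unfolding k_def j by (simp add: power2_eq_square algebra_simps)
  have M': "M = (j+4)^3" unfolding M_def j by (simp add: add.commute)
  have kM: "n^3 = M + k" unfolding k' M' j by (simp add: power3_eq_cube power2_eq_square algebra_simps)
  have key: "3 * (n^3 + k) \<le> 2 * n * k"
    unfolding k' j by (simp add: power3_eq_cube power2_eq_square algebra_simps)
  have bnd: "real (m choose k) \<le> real n ^ k" if "2 * m \<le> n^3 + k" for m
  proof (rule choose_bound)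
    show "k > 0" unfolding k_def by simp
    have "3 * (2 * m) \<le> 3 * (n^3 + k)" using that by simp
    then have "6 * m \<le> 2 * n * k" using key by linarith
    then have "real (6 * m) \<le> real (2 * n * k)" by (simp only: of_nat_le_iff)
    then show "3 * real m \<le> real n * real k" by (simp add: mult.commute)
  qed simp
  have d1: "M \<le> 2 * ((M + 1) div 2)" by linarith
  have d2: "M \<le> 2 * ((M + 2) div 2)" by linarith
  have b1: "real ((n^3 - (M + 1) div 2) choose k) \<le> real n ^ k"
    by (rule bnd) (use kM d1 in linarith)
  have b2: "real ((n^3 - (M + 2) div 2) choose k) \<le> real n ^ k"
    by (rule bnd) (use kM d2 in linarith)
  have e: "3 * n^2 = k + (3*j+14)" unfolding k' j by (simp add: power2_eq_square algebra_simps)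
  have "real n ^ (3*n^2) = real n ^ k * real n ^ (3*j+14)" unfolding e by (simp add: power_add)
  moreover have "real n ^ (3*j+14) > 2"
  proof -
    have "real n ^ 1 \<le> real n ^ (3*j+14)" by (rule power_increasing) (use j in auto)
    then show ?thesis using j by simp
  qed
  moreover have "real n ^ k > 0" using j by simp
  ultimately have "2 * real n ^ k < real n ^ (3*n^2)" by simp
  with b1 b2 have "real ((n^3 - (M + 1) div 2) choose k) + real ((n^3 - (M + 2) div 2) choose k) < real n ^ (3*n^2)"
    by linarith
  then have "((n^3 - (M + 1) div 2) choose k) + ((n^3 - (M + 2) div 2) choose k) < n ^ (3*n^2)"
    by (metis of_nat_add of_nat_less_iff of_nat_power)
  then show ?thesis unfolding k_def M_def .
qed

end
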